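(* Let $0<\epsilon<\frac13$, $\delta>0$, $k\in\mathbb{N}$ fixed, and $\lambda_n=\frac{1+\chi_n}{n}$ with $\epsilon\ge\chi_n\ge n^{-\frac13+\delta}$. Let $U_n$ be the set of vertices of $\Gamma_n$ not belonging to $\Gamma_{n,k}$. Then $$\mathbb{P}\Big(\big|\,|U_n|-\mathbb{E}[|U_n|]\,\big|\ge \tfrac1n\,\mathbb{E}[|U_n|]\Big)=o(1)\quad (n\to\infty).$$
   Context: $Q_2^n$ is the binary $n$-cube on $\mathbb{F}_2^n$. $\Gamma_n$ is the subgraph of $Q_2^n$ induced by including each vertex independently with probability $\lambda_n$. A $\Gamma_n$-subcomponent is a set of vertices of $\Gamma_n$ inducing a connected subgraph of $\Gamma_n$. Let $u_n=n^{-1/3}$, $m_n=n-\lfloor\frac34u_nn\rfloor$, $\pi(\chi_n)$ the survival probability of a Galton–Watson process with Binomial$(m_n,\lambda_n)$ offspring, $\nu_n=\lfloor\frac{u_nn}{2k(k+1)}\rfloor$, $\varphi_n=\pi(\chi_n)\nu_n(1-e^{-(1+\chi_n)u_n/4})$, and $c_k>0$ a fixed constant. $\Gamma_{n,k}$ is the subgraph of $Q_2^n$ induced by the set of vertices of $\Gamma_n$ that are contained in some $\Gamma_n$-subcomponent with at least $c_k\,(u_nn)\,\varphi_n^k$ vertices. *)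

theory Defs
  imports "HOL-Probability.Probability"
begin

text \<open>Vertices of the binary n-cube Q_2^n: subsets of {0..<n} (characteristic vectors
  in F_2^n). Two vertices are adjacent iff they differ in exactly one coordinate.\<close>

definition cube_vertices :: "nat \<Rightarrow> nat set set" where
  "cube_vertices n = Pow {..<n}"

definition cube_adj :: "nat set \<Rightarrow> nat set \<Rightarrow> bool" where
  "cube_adj x y \<longleftrightarrow> card ((x - y) \<union> (y - x)) = 1"

text \<open>The random induced subgraph Gamma_n: every vertex kept independently with
  probability lam (a configuration G, vertex v kept iff G v).\<close>

definition random_cube_subgraph :: "nat \<Rightarrow> real \<Rightarrow> (nat set \<Rightarrow> bool) pmf" where
  "random_cube_subgraph n lam = Pi_pmf (cube_vertices n) False (\<lambda>_. bernoulli_pmf lam)"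

definition kept :: "nat \<Rightarrow> (nat set \<Rightarrow> bool) \<Rightarrow> nat set set" where
  "kept n G = {v \<in> cube_vertices n. G v}"

definition subcomponent :: "nat \<Rightarrow> (nat set \<Rightarrow> bool) \<Rightarrow> nat set set \<Rightarrow> bool" where
  "subcomponent n G C \<longleftrightarrow> C \<subseteq> kept n G \<and> C \<noteq> {} \<and>
     (\<forall>x\<in>C. \<forall>y\<in>C. (x, y) \<in> {(a, b). a \<in> C \<and> b \<in> C \<and> cube_adj a b}\<^sup>*)"

fun sum_iid :: "nat \<Rightarrow> nat pmf \<Rightarrow> nat pmf" where
  "sum_iid 0 d = return_pmf 0"
| "sum_iid (Suc z) d = bind_pmf d (\<lambda>a. map_pmf (\<lambda>b. a + b) (sum_iid z d))"

fun gw_generation :: "nat pmf \<Rightarrow> nat \<Rightarrow> nat pmf" where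
  "gw_generation d 0 = return_pmf 1"
| "gw_generation d (Suc t) = bind_pmf (gw_generation d t) (\<lambda>z. sum_iid z d)"

text \<open>Survival probability: 1 - P(extinction) = 1 - lim_t P(Z_t = 0)
  (the events {Z_t = 0} increase to the extinction event).\<close>

definition gw_survival :: "nat pmf \<Rightarrow> real" where
  "gw_survival d = 1 - lim (\<lambda>t. pmf (gw_generation d t) 0)"

definition u_seq :: "nat \<Rightarrow> real" where
  "u_seq n = real n powr (-1/3)"

definition m_seq :: "nat \<Rightarrow> nat" where
  "m_seq n = n - nat \<lfloor>3/4 * u_seq n * real n\<rfloor>"

definition lam_seq :: "(nat \<Rightarrow> real) \<Rightarrow> nat \<Rightarrow> real" where
  "lam_seq chi n = (1 + chi n) / real n"

definition pi_seq :: "(nat \<Rightarrow> real) \<Rightarrow> nat \<Rightarrow> real" where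
  "pi_seq chi n = gw_survival (binomial_pmf (m_seq n) (lam_seq chi n))"

definition nu_seq :: "nat \<Rightarrow> nat \<Rightarrow> nat" where
  "nu_seq k n = nat \<lfloor>u_seq n * real n / (2 * real k * (real k + 1))\<rfloor>"

definition phi_seq :: "nat \<Rightarrow> (nat \<Rightarrow> real) \<Rightarrow> nat \<Rightarrow> real" where
  "phi_seq k chi n = pi_seq chi n * real (nu_seq k n) * (1 - exp (-(1 + chi n) * u_seq n / 4))"

definition gamma_nk_vertices ::
  "real \<Rightarrow> nat \<Rightarrow> (nat \<Rightarrow> real) \<Rightarrow> nat \<Rightarrow> (nat set \<Rightarrow> bool) \<Rightarrow> nat set set" where
  "gamma_nk_vertices c k chi n G = {v \<in> kept n G. \<exists>C. v \<in> C \<and> subcomponent n G C \<and>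
      real (card C) \<ge> c * (u_seq n * real n) * phi_seq k chi n ^ k}"

definition U_set ::
  "real \<Rightarrow> nat \<Rightarrow> (nat \<Rightarrow> real) \<Rightarrow> nat \<Rightarrow> (nat set \<Rightarrow> bool) \<Rightarrow> nat set set" where
  "U_set c k chi n G = kept n G - gamma_nk_vertices c k chi n G"

end

theory Submission
  imports Defs "HOL-Real_Asymp.Real_Asymp"
begin

definition wt :: "real \<Rightarrow> 'a set \<Rightarrow> 'a set \<Rightarrow> real" where
  "wt p A S = (\<Prod>x\<in>A. if x \<in> S then p else 1 - p)"

definition EE :: "real \<Rightarrow> 'a set \<Rightarrow> ('a set \<Rightarrow> real) \<Rightarrow> real" where
  "EE p A g = (\<Sum>S\<in>Pow A. wt p A S * g S)"

lemma EE_empty[simp]: "EE p {} g = g {}"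
  by (simp add: EE_def wt_def)

lemma EE_insert:
  assumes "finite A" "a \<notin> A"
  shows "EE p (insert a A) g = EE p A (\<lambda>S. p * g (insert a S) + (1-p) * g S)"
proof -
  have disj: "Pow A \<inter> insert a ` Pow A = {}" using assms by auto
  have inj: "inj_on (insert a) (Pow A)"
  proof (rule inj_onI)
    fix x y assume "x \<in> Pow A" "y \<in> Pow A" "insert a x = insert a y"
    hence "x = insert a x - {a}" "y = insert a y - {a}" using assms by auto
    thus "x = y" using \<open>insert a x = insert a y\<close> by simp
  qed
  have w1: "wt p (insert a A) S = (1-p) * wt p A S" if "S \<subseteq> A" for S
    using assms that unfolding wt_def by (subst prod.insert) auto
  have w2: "wt p (insert a A) (insert a S) = p * wt p A S" if "S \<subseteq> A" for S
  proof -
    have "wt p (insert a A) (insert a S) = p * (\<Prod>x\<in>A. if x \<in> insert a S then p else 1 - p)"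
      using assms unfolding wt_def by (subst prod.insert) auto
    also have "(\<Prod>x\<in>A. if x \<in> insert a S then p else 1 - p) = wt p A S"
      unfolding wt_def using assms by (intro prod.cong) auto
    finally show ?thesis .
  qed
  have "EE p (insert a A) g = (\<Sum>S\<in>Pow A. wt p (insert a A) S * g S)
        + (\<Sum>S\<in>insert a ` Pow A. wt p (insert a A) S * g S)"
    unfolding EE_def Pow_insert using assms disj by (subst sum.union_disjoint) auto
  also have "(\<Sum>S\<in>insert a ` Pow A. wt p (insert a A) S * g S)
      = (\<Sum>S\<in>Pow A. wt p (insert a A) (insert a S) * g (insert a S))"
    using inj by (subst sum.reindex) auto
  finally show ?thesis unfolding EE_def
    by (auto simp: w1 w2 sum.distrib[symmetric] algebra_simps intro!: sum.cong)
qed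

lemma EE_cong: "(\<And>S. S \<subseteq> A \<Longrightarrow> g S = h S) \<Longrightarrow> EE p A g = EE p A h"
  unfolding EE_def by (auto intro!: sum.cong)

lemma wt_nonneg: "0 \<le> p \<Longrightarrow> p \<le> 1 \<Longrightarrow> 0 \<le> wt p A S"
  unfolding wt_def by (intro prod_nonneg) auto

lemma EE_mono: "0 \<le> p \<Longrightarrow> p \<le> 1 \<Longrightarrow> (\<And>S. S \<subseteq> A \<Longrightarrow> g S \<le> h S) \<Longrightarrow> EE p A g \<le> EE p A h"
  unfolding EE_def by (auto intro!: sum_mono mult_left_mono wt_nonneg)

lemma EE_add: "EE p A (\<lambda>S. g S + h S) = EE p A g + EE p A h"
  unfolding EE_def by (simp add: sum.distrib algebra_simps)

lemma EE_scale: "EE p A (\<lambda>S. c * g S) = c * EE p A g"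
  unfolding EE_def by (simp add: sum_distrib_left algebra_simps)

lemma EE_const: "finite A \<Longrightarrow> EE p A (\<lambda>_. c) = c"
proof (induction A rule: finite_induct)
  case (insert a A) then show ?case by (simp add: EE_insert algebra_simps)
qed simp

lemma EE_prod:
  assumes "finite A"
  shows "EE p A (\<lambda>S. \<Prod>x\<in>A. \<phi> x (x \<in> S)) = (\<Prod>x\<in>A. p * \<phi> x True + (1-p) * \<phi> x False)"
  using assms
proof (induction A rule: finite_induct)
  case (insert a A)
  have "EE p (insert a A) (\<lambda>S. \<Prod>x\<in>insert a A. \<phi> x (x \<in> S))
     = EE p A (\<lambda>S. (p * \<phi> a True + (1-p) * \<phi> a False) * (\<Prod>x\<in>A. \<phi> x (x \<in> S)))"
    unfolding EE_insert[OF insert(1,2)]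
  proof (intro EE_cong)
    fix S assume "S \<subseteq> A"
    have e: "(\<Prod>x\<in>A. \<phi> x (x \<in> insert a S)) = (\<Prod>x\<in>A. \<phi> x (x \<in> S))"
    proof (intro prod.cong refl)
      fix x assume "x \<in> A" hence "(x \<in> insert a S) = (x \<in> S)" using insert(2) by auto
      thus "\<phi> x (x \<in> insert a S) = \<phi> x (x \<in> S)" by simp
    qed
    show "p * (\<Prod>x\<in>insert a A. \<phi> x (x \<in> insert a S)) + (1 - p) * (\<Prod>x\<in>insert a A. \<phi> x (x \<in> S)) =
         (p * \<phi> a True + (1 - p) * \<phi> a False) * (\<Prod>x\<in>A. \<phi> x (x \<in> S))"
    proof -
      have "a \<notin> S" using insert(2) \<open>S \<subseteq> A\<close> by auto
      thus ?thesis using insert(1,2) e by (auto simp: algebra_simps)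
    qed
  qed
  then show ?case using insert by (simp add: EE_scale)
qed simp

lemma convex_sq: "0 \<le> p \<Longrightarrow> p \<le> 1 \<Longrightarrow> (p * x + (1-p) * y)\<^sup>2 \<le> p * x\<^sup>2 + (1-p) * (y::real)\<^sup>2"
proof -
  assume "0 \<le> p" "p \<le> 1"
  hence "0 \<le> p * (1-p) * (x-y)\<^sup>2" by simp
  moreover have "p * x\<^sup>2 + (1-p) * y\<^sup>2 - (p * x + (1-p) * y)\<^sup>2 = p * (1-p) * (x-y)\<^sup>2"
    by (simp add: power2_eq_square algebra_simps)
  ultimately show ?thesis by linarith
qed

lemma var_split: "p*(x - m)\<^sup>2 + (1-p)*(y-m)\<^sup>2 = (p*x+(1-p)*y - m)\<^sup>2 + p*(1-p)*(x-y)\<^sup>2" for p x y m :: real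
  by (simp add: power2_eq_square algebra_simps)

lemma efron_stein:
  assumes "finite A" "0 \<le> p" "p \<le> 1"
  shows "EE p A (\<lambda>S. (f S - EE p A f)\<^sup>2) \<le> (\<Sum>a\<in>A. EE p A (\<lambda>S. (f (insert a S) - f (S - {a}))\<^sup>2))"
  using assms(1)
proof (induction A arbitrary: f rule: finite_induct)
  case empty then show ?case by simp
next
  case (insert a A f)
  define h where "h S = p * f (insert a S) + (1-p) * f S" for S
  define m where "m = EE p A h"
  have m: "EE p (insert a A) f = m" unfolding m_def h_def by (simp add: EE_insert insert)
  have "EE p (insert a A) (\<lambda>S. (f S - EE p (insert a A) f)\<^sup>2)
      = EE p A (\<lambda>S. (h S - m)\<^sup>2 + p * (1-p) * (f (insert a S) - f S)\<^sup>2)"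
    unfolding m unfolding EE_insert[OF insert(1,2)] h_def
    by (intro EE_cong) (rule var_split)
  also have "\<dots> = EE p A (\<lambda>S. (h S - EE p A h)\<^sup>2) + p * (1-p) * EE p A (\<lambda>S. (f (insert a S) - f S)\<^sup>2)"
    by (simp add: EE_add EE_scale m_def)
  also have "\<dots> \<le> (\<Sum>j\<in>A. EE p A (\<lambda>S. (h (insert j S) - h (S - {j}))\<^sup>2)) + EE p A (\<lambda>S. (f (insert a S) - f S)\<^sup>2)"
  proof (rule add_mono)
    show "EE p A (\<lambda>S. (h S - EE p A h)\<^sup>2) \<le> (\<Sum>j\<in>A. EE p A (\<lambda>S. (h (insert j S) - h (S - {j}))\<^sup>2))"
      by (rule insert.IH)
    have "0 \<le> EE p A (\<lambda>S. (f (insert a S) - f S)\<^sup>2)"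
      using EE_mono[OF assms(2,3), of A "\<lambda>_. 0"] by (simp add: EE_const insert)
    moreover have "p * (1-p) \<le> 1" using assms(2,3) mult_left_mono[of "1-p" 1 p] by simp
    ultimately show "p * (1-p) * EE p A (\<lambda>S. (f (insert a S) - f S)\<^sup>2) \<le> EE p A (\<lambda>S. (f (insert a S) - f S)\<^sup>2)"
      using mult_right_mono[of "p*(1-p)" 1 "EE p A (\<lambda>S. (f (insert a S) - f S)\<^sup>2)"] by simp
  qed
  also have "\<dots> \<le> (\<Sum>j\<in>insert a A. EE p (insert a A) (\<lambda>S. (f (insert j S) - f (S - {j}))\<^sup>2))"
  proof -
    have 1: "EE p (insert a A) (\<lambda>S. (f (insert a S) - f (S - {a}))\<^sup>2) = EE p A (\<lambda>S. (f (insert a S) - f S)\<^sup>2)"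
      unfolding EE_insert[OF insert(1,2)]
    proof (intro EE_cong)
      fix S assume "S \<subseteq> A"
      hence "a \<notin> S" using insert(2) by auto
      hence "insert a S - {a} = S" "S - {a} = S" by auto
      thus "p * (f (insert a (insert a S)) - f (insert a S - {a}))\<^sup>2 + (1 - p) * (f (insert a S) - f (S - {a}))\<^sup>2 =
          (f (insert a S) - f S)\<^sup>2" by (simp add: algebra_simps)
    qed
    have 2: "EE p A (\<lambda>S. (h (insert j S) - h (S - {j}))\<^sup>2) \<le> EE p (insert a A) (\<lambda>S. (f (insert j S) - f (S - {j}))\<^sup>2)"
      if j: "j \<in> A" for j
      unfolding EE_insert[OF insert(1,2)]
    proof (intro EE_mono[OF assms(2,3)])
      fix S assume "S \<subseteq> A"
      have "a \<noteq> j" using j insert(2) by auto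
      hence e1: "insert a (insert j S) = insert j (insert a S)" and e2: "insert a (S - {j}) = insert a S - {j}" by auto
      have "h (insert j S) - h (S - {j}) = p * (f (insert j (insert a S)) - f (insert a S - {j}))
              + (1-p) * (f (insert j S) - f (S - {j}))"
        unfolding h_def e1 e2 by (simp add: algebra_simps)
      thus "(h (insert j S) - h (S - {j}))\<^sup>2 \<le> p * (f (insert j (insert a S)) - f (insert a S - {j}))\<^sup>2 +
           (1 - p) * (f (insert j S) - f (S - {j}))\<^sup>2"
        using convex_sq[OF assms(2,3)] by simp
    qed
    have 3: "(\<Sum>j\<in>A. EE p A (\<lambda>S. (h (insert j S) - h (S - {j}))\<^sup>2)) \<le> (\<Sum>j\<in>A. EE p (insert a A) (\<lambda>S. (f (insert j S) - f (S - {j}))\<^sup>2))"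
      using 2 by (rule sum_mono)
    show ?thesis using insert(1,2) 1 3 by (simp add: sum.insert)
  qed
  finally show ?case .
qed

lemma chebyshev_EE:
  assumes "finite A" "0 \<le> p" "p \<le> 1" "t > 0"
  shows "(\<Sum>S\<in>{S\<in>Pow A. t \<le> \<bar>f S - m\<bar>}. wt p A S) \<le> EE p A (\<lambda>S. (f S - m)\<^sup>2) / t\<^sup>2"
proof -
  have "(\<Sum>S\<in>{S\<in>Pow A. t \<le> \<bar>f S - m\<bar>}. wt p A S) \<le> (\<Sum>S\<in>{S\<in>Pow A. t \<le> \<bar>f S - m\<bar>}. wt p A S * ((f S - m)\<^sup>2 / t\<^sup>2))"
  proof (intro sum_mono)
    fix S assume "S \<in> {S\<in>Pow A. t \<le> \<bar>f S - m\<bar>}"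
    hence "t\<^sup>2 \<le> (f S - m)\<^sup>2" using assms(4)
      by (metis (mono_tags, lifting) abs_le_square_iff abs_of_pos mem_Collect_eq)
    hence "1 \<le> (f S - m)\<^sup>2 / t\<^sup>2" using assms(4) by simp
    thus "wt p A S \<le> wt p A S * ((f S - m)\<^sup>2 / t\<^sup>2)"
      using wt_nonneg[OF assms(2,3)] by (metis mult.right_neutral mult_left_mono)
  qed
  also have "\<dots> \<le> (\<Sum>S\<in>Pow A. wt p A S * ((f S - m)\<^sup>2 / t\<^sup>2))"
    using assms by (intro sum_mono2) (auto intro!: mult_nonneg_nonneg wt_nonneg divide_nonneg_nonneg)
  also have "\<dots> = EE p A (\<lambda>S. (f S - m)\<^sup>2) / t\<^sup>2"
    unfolding EE_def by (simp add: sum_divide_distrib)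
  finally show ?thesis .
qed

lemma expectation_Pi:
  assumes "finite V" "0 \<le> p" "p \<le> 1"
  shows "measure_pmf.expectation (Pi_pmf V False (\<lambda>_. bernoulli_pmf p)) g = EE p V (\<lambda>K. g (\<lambda>x. x \<in> K))"
proof -
  let ?A = "(\<lambda>K x. x \<in> K) ` Pow V"
  have "measure_pmf.expectation (Pi_pmf V False (\<lambda>_. bernoulli_pmf p)) g
      = (\<Sum>G\<in>?A. g G * pmf (Pi_pmf V False (\<lambda>_. bernoulli_pmf p)) G)"
  proof (rule integral_measure_pmf_real)
    show "finite ?A" using assms by simp
    fix G assume "G \<in> set_pmf (Pi_pmf V False (\<lambda>_. bernoulli_pmf p))"
    hence "\<forall>x. x \<notin> V \<longrightarrow> G x = False" using set_Pi_pmf_subset[OF assms(1), of False "\<lambda>_. bernoulli_pmf p"] by blast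
    hence "G = (\<lambda>x. x \<in> {x\<in>V. G x})" by auto
    thus "G \<in> ?A" by blast
  qed
  also have "\<dots> = (\<Sum>K\<in>Pow V. g (\<lambda>x. x \<in> K) * pmf (Pi_pmf V False (\<lambda>_. bernoulli_pmf p)) (\<lambda>x. x \<in> K))"
  proof (rule sum.reindex[unfolded comp_def])
    show "inj_on (\<lambda>K x. x \<in> K) (Pow V)" unfolding inj_on_def by (metis Collect_mem_eq)
  qed
  also have "\<dots> = EE p V (\<lambda>K. g (\<lambda>x. x \<in> K))"
    unfolding EE_def
  proof (intro sum.cong refl)
    fix K assume "K \<in> Pow V"
    hence "pmf (Pi_pmf V False (\<lambda>_. bernoulli_pmf p)) (\<lambda>x. x \<in> K) = wt p V K"
      using assms unfolding wt_def by (subst pmf_Pi') (auto intro!: prod.cong)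
    thus "g (\<lambda>x. x \<in> K) * pmf (Pi_pmf V False (\<lambda>_. bernoulli_pmf p)) (\<lambda>x. x \<in> K) = wt p V K * g (\<lambda>x. x \<in> K)"
      by simp
  qed
  finally show ?thesis .
qed

lemma prob_Pi:
  assumes "finite V" "0 \<le> p" "p \<le> 1"
  shows "measure_pmf.prob (Pi_pmf V False (\<lambda>_. bernoulli_pmf p)) B = (\<Sum>K\<in>{K\<in>Pow V. (\<lambda>x. x \<in> K) \<in> B}. wt p V K)"
proof -
  have "measure_pmf.prob (Pi_pmf V False (\<lambda>_. bernoulli_pmf p)) B
      = measure_pmf.expectation (Pi_pmf V False (\<lambda>_. bernoulli_pmf p)) (indicator B)"
    by simp
  also have "\<dots> = EE p V (\<lambda>K. indicator B (\<lambda>x. x \<in> K))" by (rule expectation_Pi[OF assms])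
  also have "\<dots> = (\<Sum>K\<in>Pow V. if (\<lambda>x. x \<in> K) \<in> B then wt p V K else 0)"
    unfolding EE_def by (intro sum.cong) (auto simp: indicator_def)
  also have "\<dots> = (\<Sum>K\<in>{K\<in>Pow V. (\<lambda>x. x \<in> K) \<in> B}. wt p V K)"
    by (rule sum.inter_filter[symmetric]) (simp add: assms(1))
  finally show ?thesis .
qed


definition EC :: "nat set set \<Rightarrow> (nat set \<times> nat set) set" where
  "EC C = {(a, b). a \<in> C \<and> b \<in> C \<and> cube_adj a b}"

definition conn :: "nat set set \<Rightarrow> bool" where
  "conn C \<longleftrightarrow> (\<forall>x\<in>C. \<forall>y\<in>C. (x, y) \<in> (EC C)\<^sup>*)"

definition big :: "real \<Rightarrow> nat set set \<Rightarrow> nat set \<Rightarrow> bool" where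
  "big T K w \<longleftrightarrow> (\<exists>C. w \<in> C \<and> C \<subseteq> K \<and> conn C \<and> T \<le> real (card C))"

definition UK :: "real \<Rightarrow> nat set set \<Rightarrow> nat set set" where
  "UK T K = {w \<in> K. \<not> big T K w}"

definition comp :: "nat set set \<Rightarrow> nat set \<Rightarrow> nat set set" where
  "comp K u = {x. (u, x) \<in> (EC K)\<^sup>*}"

lemma U_set_eq:
  assumes "K \<subseteq> cube_vertices n"
  shows "U_set c k chi n (\<lambda>x. x \<in> K) = UK (c * (u_seq n * real n) * phi_seq k chi n ^ k) K"
proof -
  have kept: "kept n (\<lambda>x. x \<in> K) = K" using assms unfolding kept_def by auto
  show ?thesis
    unfolding U_set_def UK_def gamma_nk_vertices_def kept big_def subcomponent_def conn_def EC_def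
    by auto
qed

lemma cube_adj_sym: "cube_adj a b = cube_adj b a"
  unfolding cube_adj_def by (simp add: Un_commute)

lemma EC_sym: "(x, y) \<in> (EC K)\<^sup>* \<Longrightarrow> (y, x) \<in> (EC K)\<^sup>*"
proof -
  have "sym (EC K)" unfolding sym_def EC_def using cube_adj_sym by auto
  moreover assume "(x, y) \<in> (EC K)\<^sup>*"
  ultimately show ?thesis by (meson sym_rtrancl symE)
qed

lemma EC_mono: "C \<subseteq> D \<Longrightarrow> EC C \<subseteq> EC D"
  unfolding EC_def by auto

lemma big_mono: "K \<subseteq> K' \<Longrightarrow> big T K w \<Longrightarrow> big T K' w"
  unfolding big_def by blast

lemma comp_sub: "u \<in> K \<Longrightarrow> comp K u \<subseteq> K"
proof
  fix x assume "u \<in> K" "x \<in> comp K u"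
  hence "(u, x) \<in> (EC K)\<^sup>*" unfolding comp_def by simp
  thus "x \<in> K" using \<open>u \<in> K\<close> by (induction rule: rtrancl_induct) (auto simp: EC_def)
qed

lemma comp_self: "u \<in> comp K u"
  unfolding comp_def by simp

lemma comp_eq: "x \<in> comp K u \<Longrightarrow> comp K x = comp K u"
  unfolding comp_def using EC_sym by (auto intro: rtrancl_trans)

lemma comp_path: "(u, x) \<in> (EC K)\<^sup>* \<Longrightarrow> (u, x) \<in> (EC (comp K u))\<^sup>*"
proof (induction rule: rtrancl_induct)
  case base then show ?case by simp
next
  case (step y z)
  hence "y \<in> comp K u" "z \<in> comp K u" unfolding comp_def by (auto intro: rtrancl_into_rtrancl)
  hence "(y, z) \<in> EC (comp K u)" using step(2) unfolding EC_def by auto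
  thus ?case using step(3) by (rule rtrancl_into_rtrancl[rotated])
qed

lemma comp_conn: "conn (comp K u)"
  unfolding conn_def
proof (intro ballI)
  fix x y assume x: "x \<in> comp K u" and y: "y \<in> comp K u"
  have "(u, x) \<in> (EC (comp K u))\<^sup>*" using x comp_path unfolding comp_def by blast
  moreover have "(u, y) \<in> (EC (comp K u))\<^sup>*" using y comp_path unfolding comp_def by blast
  ultimately show "(x, y) \<in> (EC (comp K u))\<^sup>*" using EC_sym by (blast intro: rtrancl_trans)
qed

lemma comp_small:
  assumes "finite K" "w \<in> K" "\<not> big T K w"
  shows "real (card (comp K w)) < T"
  using assms comp_sub[of w K] comp_conn[of K w] comp_self[of w K] unfolding big_def by force

lemma path_to_v:
  assumes "(w, v) \<in> (EC C)\<^sup>*"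
  shows "w = v \<or> (\<exists>u. u \<in> C \<and> cube_adj u v \<and> (w, u) \<in> (EC (C - {v}))\<^sup>*)"
  using assms
proof (induction rule: converse_rtrancl_induct)
  case base then show ?case by simp
next
  case (step w w')
  have ww': "w \<in> C" "w' \<in> C" "cube_adj w w'" using step(1) unfolding EC_def by auto
  show ?case
  proof (cases "w = v")
    case True then show ?thesis by simp
  next
    case False
    show ?thesis
    proof (cases "w' = v")
      case True then show ?thesis using ww' False by auto
    next
      case False': False
      then obtain u where u: "u \<in> C" "cube_adj u v" "(w', u) \<in> (EC (C - {v}))\<^sup>*" using step(3) by auto
      have "(w, w') \<in> EC (C - {v})" using ww' False False' unfolding EC_def by auto
      thus ?thesis using u by (meson converse_rtrancl_into_rtrancl)
    qed
  qed
qed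

lemma UK_diff1:
  assumes "v \<notin> K0"
  shows "UK T (insert v K0) - UK T K0 \<subseteq> {v}"
  unfolding UK_def using big_mono[of K0 "insert v K0" T] by auto

lemma UK_diff2:
  assumes "finite K0" "v \<notin> K0"
  shows "UK T K0 - UK T (insert v K0) \<subseteq> (\<Union>u\<in>{u\<in>K0. cube_adj u v \<and> real (card (comp K0 u)) < T}. comp K0 u)"
proof
  fix w assume w: "w \<in> UK T K0 - UK T (insert v K0)"
  hence wK: "w \<in> K0" "\<not> big T K0 w" "big T (insert v K0) w" unfolding UK_def by auto
  then obtain C where C: "w \<in> C" "C \<subseteq> insert v K0" "conn C" "T \<le> real (card C)" unfolding big_def by blast
  have "v \<in> C"
  proof (rule ccontr)
    assume "v \<notin> C" hence "C \<subseteq> K0" using C by auto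
    thus False using C wK unfolding big_def by blast
  qed
  hence "(w, v) \<in> (EC C)\<^sup>*" using C unfolding conn_def by blast
  moreover have "w \<noteq> v" using wK assms by auto
  ultimately obtain u where u: "u \<in> C" "cube_adj u v" "(w, u) \<in> (EC (C - {v}))\<^sup>*" using path_to_v by metis
  have "C - {v} \<subseteq> K0" using C by auto
  hence "(EC (C - {v}))\<^sup>* \<subseteq> (EC K0)\<^sup>*" by (intro rtrancl_mono EC_mono)
  hence "(w, u) \<in> (EC K0)\<^sup>*" using u(3) by (rule subsetD)
  hence "u \<in> comp K0 w" unfolding comp_def by simp
  hence ceq: "comp K0 u = comp K0 w" by (rule comp_eq)
  have uK: "u \<in> K0" using \<open>u \<in> comp K0 w\<close> comp_sub[OF wK(1)] by (rule subsetD[rotated])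
  have "real (card (comp K0 u)) < T" using ceq comp_small[OF assms(1) wK(1,2)] by simp
  moreover have "w \<in> comp K0 u" using ceq comp_self by simp
  ultimately show "w \<in> (\<Union>u\<in>{u\<in>K0. cube_adj u v \<and> real (card (comp K0 u)) < T}. comp K0 u)"
    using uK u(2) by (intro UN_I[of u]) auto
qed

lemma card_diff_bound:
  assumes "finite A" "finite B"
  shows "\<bar>real (card A) - real (card B)\<bar> \<le> real (card (A - B)) + real (card (B - A))"
proof -
  have 1: "card (A - B) = card A - card (A \<inter> B)" by (simp add: assms card_Diff_subset_Int)
  have 2: "card (B - A) = card B - card (A \<inter> B)" by (simp add: assms card_Diff_subset_Int Int_commute)
  have 3: "card (A \<inter> B) \<le> card A" "card (A \<inter> B) \<le> card B" using assms by (auto intro: card_mono)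
  show ?thesis using 1 2 3 by (simp add: of_nat_diff)
qed

lemma neighbors_card:
  assumes "v \<subseteq> {..<n}"
  shows "card {u \<in> cube_vertices n. cube_adj u v} \<le> n"
proof -
  have "{u \<in> cube_vertices n. cube_adj u v} \<subseteq> (\<lambda>i. (v - {i}) \<union> ({i} - v)) ` {..<n}"
  proof
    fix u assume "u \<in> {u \<in> cube_vertices n. cube_adj u v}"
    hence u: "u \<subseteq> {..<n}" "card ((u - v) \<union> (v - u)) = 1" unfolding cube_vertices_def cube_adj_def by auto
    then obtain i where i: "(u - v) \<union> (v - u) = {i}" by (meson card_1_singletonE)
    hence "i < n" using u(1) assms by blast
    moreover have "u = (v - {i}) \<union> ({i} - v)" using i by blast
    ultimately show "u \<in> (\<lambda>i. (v - {i}) \<union> ({i} - v)) ` {..<n}" by blast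
  qed
  hence "card {u \<in> cube_vertices n. cube_adj u v} \<le> card ((\<lambda>i. (v - {i}) \<union> ({i} - v)) ` {..<n})"
    by (intro card_mono) auto
  also have "\<dots> \<le> n" using card_image_le[of "{..<n}"] by simp
  finally show ?thesis .
qed

lemma UK_flip:
  assumes "S \<subseteq> cube_vertices n" "v \<in> cube_vertices n" "T \<ge> 0"
  shows "\<bar>real (card (UK T (insert v S))) - real (card (UK T (S - {v})))\<bar> \<le> 1 + real n * T"
proof -
  define K0 where "K0 = S - {v}"
  have ins: "insert v S = insert v K0" unfolding K0_def by auto
  have fV: "finite (cube_vertices n)" by (simp add: cube_vertices_def)
  have "K0 \<subseteq> cube_vertices n" using assms(1) unfolding K0_def by auto
  hence fin: "finite K0" using fV by (rule finite_subset)
  have v0: "v \<notin> K0" unfolding K0_def by auto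
  have K0V: "K0 \<subseteq> cube_vertices n" using assms(1) unfolding K0_def by auto
  define N where "N = {u\<in>K0. cube_adj u v \<and> real (card (comp K0 u)) < T}"
  have finU: "finite (UK T K0)" "finite (UK T (insert v K0))" using fin unfolding UK_def by auto
  have "real (card (UK T (insert v K0) - UK T K0)) \<le> 1"
    using card_mono[OF _ UK_diff1[OF v0, of T]] by simp
  moreover have "real (card (UK T K0 - UK T (insert v K0))) \<le> real n * T"
  proof -
    have "card (UK T K0 - UK T (insert v K0)) \<le> card (\<Union>u\<in>N. comp K0 u)"
    proof (rule card_mono)
      have "(\<Union>u\<in>N. comp K0 u) \<subseteq> K0" using comp_sub unfolding N_def by blast
      thus "finite (\<Union>u\<in>N. comp K0 u)" using fin by (rule finite_subset)
      show "UK T K0 - UK T (insert v K0) \<subseteq> (\<Union>u\<in>N. comp K0 u)" using UK_diff2[OF fin v0] unfolding N_def .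
    qed
    also have "\<dots> \<le> (\<Sum>u\<in>N. card (comp K0 u))" by (rule card_UN_le) (simp add: N_def fin)
    finally have "real (card (UK T K0 - UK T (insert v K0))) \<le> real (\<Sum>u\<in>N. card (comp K0 u))"
      by (simp only: of_nat_le_iff)
    also have "\<dots> = (\<Sum>u\<in>N. real (card (comp K0 u)))" by simp
    also have "\<dots> \<le> (\<Sum>u\<in>N. T)" by (intro sum_mono) (auto simp: N_def)
    also have "\<dots> = real (card N) * T" by simp
    also have "\<dots> \<le> real n * T"
    proof (intro mult_right_mono assms(3))
      have "N \<subseteq> {u \<in> cube_vertices n. cube_adj u v}" using K0V unfolding N_def by auto
      hence "card N \<le> card {u \<in> cube_vertices n. cube_adj u v}" by (intro card_mono) (auto simp: cube_vertices_def)
      also have "\<dots> \<le> n" using assms(2) neighbors_card unfolding cube_vertices_def by auto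
      finally show "real (card N) \<le> real n" by simp
    qed
    finally show ?thesis .
  qed
  ultimately show ?thesis using card_diff_bound[OF finU(2) finU(1)] unfolding ins K0_def[symmetric] by linarith
qed

lemma isolated_in_UK:
  assumes "v \<in> K" "\<forall>u\<in>K. \<not> cube_adj v u" "T > 1"
  shows "v \<in> UK T K"
proof -
  have "\<not> big T K v"
  proof
    assume "big T K v"
    then obtain C where C: "v \<in> C" "C \<subseteq> K" "conn C" "T \<le> real (card C)" unfolding big_def by blast
    have "C \<subseteq> {v}"
    proof
      fix y assume "y \<in> C"
      hence "(v, y) \<in> (EC C)\<^sup>*" using C unfolding conn_def by blast
      thus "y \<in> {v}"
      proof (cases rule: converse_rtranclE)
        case (step z) thus ?thesis using C assms(2) unfolding EC_def by auto
      qed simp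
    qed
    hence "card C \<le> 1" using card_mono[of "{v}" C] by simp
    thus False using C(4) assms(3) by simp
  qed
  thus ?thesis using assms(1) unfolding UK_def by auto
qed


definition pgf :: "nat pmf \<Rightarrow> real \<Rightarrow> ennreal" where
  "pgf M s = (\<integral>\<^sup>+x. ennreal (s ^ x) \<partial>measure_pmf M)"

lemma pgf_sum_iid:
  assumes "0 \<le> s"
  shows "pgf (sum_iid z d) s = pgf d s ^ z"
proof (induction z)
  case 0 then show ?case by (simp add: pgf_def)
next
  case (Suc z)
  have "pgf (sum_iid (Suc z) d) s = (\<integral>\<^sup>+a. \<integral>\<^sup>+b. ennreal (s ^ a) * ennreal (s ^ b) \<partial>sum_iid z d \<partial>d)"
    unfolding pgf_def using assms by (simp add: power_add ennreal_mult)
  also have "\<dots> = (\<integral>\<^sup>+a. ennreal (s ^ a) * pgf (sum_iid z d) s \<partial>d)"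
    unfolding pgf_def by (simp add: nn_integral_cmult)
  also have "\<dots> = pgf d s * pgf (sum_iid z d) s"
    unfolding pgf_def by (simp add: nn_integral_multc)
  finally show ?case using Suc by (simp add: mult.commute)
qed

lemma pgf_gw_le:
  assumes "0 \<le> s" "s \<le> 1" "pgf d s \<le> ennreal s"
  shows "pgf (gw_generation d t) s \<le> ennreal s"
proof (induction t)
  case 0 then show ?case by (simp add: pgf_def)
next
  case (Suc t)
  have "pgf (gw_generation d (Suc t)) s = (\<integral>\<^sup>+z. pgf d s ^ z \<partial>gw_generation d t)"
    unfolding pgf_def[of "gw_generation d (Suc t)"] using pgf_sum_iid[OF assms(1)]
    by (simp add: pgf_def)
  also have "\<dots> \<le> (\<integral>\<^sup>+z. ennreal (s ^ z) \<partial>gw_generation d t)"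
  proof (intro nn_integral_mono)
    fix z
    have "pgf d s ^ z \<le> ennreal s ^ z" using assms(3) by (rule power_mono) simp
    thus "pgf d s ^ z \<le> ennreal (s ^ z)" using assms(1) by (simp add: ennreal_power)
  qed
  also have "\<dots> \<le> ennreal s" using Suc unfolding pgf_def .
  finally show ?case .
qed

lemma pmf0_le_pgf:
  assumes "0 \<le> s"
  shows "ennreal (pmf M 0) \<le> pgf M s"
proof -
  have "ennreal (pmf M 0) = (\<integral>\<^sup>+z. indicator {0} z \<partial>measure_pmf M)"
    by (simp add: emeasure_pmf_single)
  also have "\<dots> \<le> pgf M s" unfolding pgf_def
    by (intro nn_integral_mono) (auto simp: indicator_def)
  finally show ?thesis .
qed

lemma gw_incseq: "incseq (\<lambda>t. pmf (gw_generation d t) 0)"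
proof (rule incseq_SucI)
  fix t
  have "ennreal (pmf (gw_generation d t) 0) = (\<integral>\<^sup>+z. indicator {0} z \<partial>measure_pmf (gw_generation d t))"
    by (simp add: emeasure_pmf_single)
  also have "\<dots> \<le> (\<integral>\<^sup>+z. ennreal (pmf (sum_iid z d) 0) \<partial>measure_pmf (gw_generation d t))"
  proof (intro nn_integral_mono)
    fix z show "indicator {0} z \<le> ennreal (pmf (sum_iid z d) 0)"
      by (cases "z = 0") (simp_all add: indicator_def)
  qed
  also have "\<dots> = ennreal (pmf (gw_generation d (Suc t)) 0)"
    by (simp add: ennreal_pmf_bind)
  finally show "pmf (gw_generation d t) 0 \<le> pmf (gw_generation d (Suc t)) 0"
    by (simp add: ennreal_le_iff)
qed

lemma gw_lim:
  obtains L where "(\<lambda>t. pmf (gw_generation d t) 0) \<longlonglongrightarrow> L" "0 \<le> L" "L \<le> 1"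
proof -
  obtain L where L: "(\<lambda>t. pmf (gw_generation d t) 0) \<longlonglongrightarrow> L"
  proof (rule incseq_convergent[OF gw_incseq[of d], where B=1])
    show "\<forall>i. pmf (gw_generation d i) 0 \<le> 1" by (simp add: pmf_le_1)
  qed
  have "0 \<le> L" using L by (rule LIMSEQ_le_const) (auto simp: pmf_nonneg)
  moreover have "L \<le> 1" using L by (rule LIMSEQ_le_const2) (auto simp: pmf_le_1)
  ultimately show ?thesis using that L by blast
qed

lemma gw_survival_bounds: "0 \<le> gw_survival d" "gw_survival d \<le> 1"
proof -
  obtain L where L: "(\<lambda>t. pmf (gw_generation d t) 0) \<longlonglongrightarrow> L" "0 \<le> L" "L \<le> 1" by (rule gw_lim)
  have "lim (\<lambda>t. pmf (gw_generation d t) 0) = L" using L(1) by (rule limI)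
  thus "0 \<le> gw_survival d" "gw_survival d \<le> 1" unfolding gw_survival_def using L by auto
qed

lemma gw_survival_lower:
  assumes "0 \<le> s" "s \<le> 1" "pgf d s \<le> ennreal s"
  shows "1 - s \<le> gw_survival d"
proof -
  obtain L where L: "(\<lambda>t. pmf (gw_generation d t) 0) \<longlonglongrightarrow> L" "0 \<le> L" "L \<le> 1" by (rule gw_lim)
  have le: "pmf (gw_generation d t) 0 \<le> s" for t
    using order.trans[OF pmf0_le_pgf[OF assms(1)] pgf_gw_le[OF assms]] assms(1) by (simp add: ennreal_le_iff)
  have "L \<le> s" using L(1) by (rule LIMSEQ_le_const2) (use le in auto)
  moreover have "lim (\<lambda>t. pmf (gw_generation d t) 0) = L" using L(1) by (rule limI)
  ultimately show ?thesis unfolding gw_survival_def by simp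
qed

lemma pgf_binomial:
  assumes "0 \<le> p" "p \<le> 1" "0 \<le> s"
  shows "pgf (binomial_pmf m p) s = ennreal ((p * s + (1 - p)) ^ m)"
proof -
  have "pgf (binomial_pmf m p) s = (\<Sum>x\<in>{..m}. ennreal (s ^ x) * ennreal (pmf (binomial_pmf m p) x))"
    unfolding pgf_def
  proof (rule nn_integral_measure_pmf_support)
    fix x assume "x \<in> set_pmf (binomial_pmf m p)" "x \<notin> {..m}"
    thus "ennreal (s ^ x) = 0" using assms by (auto simp: set_pmf_binomial_eq split: if_splits)
  qed auto
  also have "\<dots> = ennreal (\<Sum>x\<in>{..m}. s ^ x * pmf (binomial_pmf m p) x)"
    using assms by (simp add: ennreal_mult[symmetric] sum_nonneg pmf_nonneg)
  also have "(\<Sum>x\<in>{..m}. s ^ x * pmf (binomial_pmf m p) x) = (\<Sum>x\<in>{..m}. real (m choose x) * (p * s) ^ x * (1 - p) ^ (m - x))"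
    using assms by (intro sum.cong) (auto simp: power_mult_distrib)
  also have "\<dots> = (p * s + (1 - p)) ^ m" by (rule binomial_ring[symmetric])
  finally show ?thesis .
qed


lemma EE_sum: "EE p A (\<lambda>S. \<Sum>v\<in>B. g v S) = (\<Sum>v\<in>B. EE p A (g v))"
  unfolding EE_def by (simp add: sum_distrib_left sum.swap[of _ B])

definition isof :: "nat set \<Rightarrow> nat set \<Rightarrow> bool \<Rightarrow> real" where
  "isof v x b = (if x = v then (if b then 1 else 0) else if cube_adj v x then (if b then 0 else 1) else 1)"

lemma cube_adj_irrefl: "\<not> cube_adj v v"
  unfolding cube_adj_def by simp

lemma iso_val:
  assumes "finite V" "K \<subseteq> V" "v \<in> V"
  shows "(\<Prod>x\<in>V. isof v x (x \<in> K)) = (if v \<in> K \<and> (\<forall>u\<in>K. \<not> cube_adj v u) then 1 else 0)"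
proof (cases "v \<in> K \<and> (\<forall>u\<in>K. \<not> cube_adj v u)")
  case True
  have "(\<Prod>x\<in>V. isof v x (x \<in> K)) = (\<Prod>x\<in>V. 1)"
    using True by (intro prod.cong) (auto simp: isof_def)
  thus ?thesis using True by simp
next
  case False
  then consider "v \<notin> K" | u where "u \<in> K" "cube_adj v u" by blast
  hence "\<exists>x\<in>V. isof v x (x \<in> K) = 0"
  proof cases
    case 1 thus ?thesis using assms(3) by (intro bexI[of _ v]) (auto simp: isof_def)
  next
    case 2
    hence "u \<noteq> v" using cube_adj_irrefl by blast
    thus ?thesis using 2 assms(2) by (intro bexI[of _ u]) (auto simp: isof_def)
  qed
  hence "(\<Prod>x\<in>V. isof v x (x \<in> K)) = 0" using assms(1) by (simp add: prod_zero_iff)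
  thus ?thesis using False by simp
qed

lemma EE_iso:
  assumes "finite V" "v \<in> V" "0 \<le> p" "p \<le> 1" "card {x\<in>V. cube_adj x v} \<le> n"
  shows "EE p V (\<lambda>K. \<Prod>x\<in>V. isof v x (x \<in> K)) \<ge> p * (1 - p) ^ n"
proof -
  have "EE p V (\<lambda>K. \<Prod>x\<in>V. isof v x (x \<in> K)) = (\<Prod>x\<in>V. p * isof v x True + (1-p) * isof v x False)"
    by (rule EE_prod[OF assms(1)])
  also have "\<dots> = (\<Prod>x\<in>V. if x = v then p else if cube_adj v x then 1 - p else 1)"
    by (intro prod.cong) (auto simp: isof_def)
  also have "\<dots> = p * (\<Prod>x\<in>V - {v}. if cube_adj v x then 1 - p else 1)"
    using assms(1,2) by (subst prod.remove[of _ v]) (auto intro!: prod.cong)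
  also have "(\<Prod>x\<in>V - {v}. if cube_adj v x then 1 - p else 1) = (1 - p) ^ card ((V - {v}) \<inter> {x. cube_adj v x})"
    using assms(1) by (simp add: prod.If_cases)
  finally have eq: "EE p V (\<lambda>K. \<Prod>x\<in>V. isof v x (x \<in> K)) = p * (1 - p) ^ card ((V - {v}) \<inter> {x. cube_adj v x})" .
  have "card ((V - {v}) \<inter> {x. cube_adj v x}) \<le> card {x\<in>V. cube_adj x v}"
    using assms(1) cube_adj_sym by (intro card_mono) auto
  hence "card ((V - {v}) \<inter> {x. cube_adj v x}) \<le> n" using assms(5) by linarith
  hence "(1 - p) ^ n \<le> (1 - p) ^ card ((V - {v}) \<inter> {x. cube_adj v x})"
    using assms(3,4) by (intro power_decreasing) auto
  thus ?thesis unfolding eq using assms(3) by (simp add: mult_left_mono)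
qed

lemma one_minus_pow_lower:
  assumes "0 \<le> p" "p \<le> 1/2" "real n * p \<le> 3/2"
  shows "exp (-3) \<le> (1 - p) ^ n"
proof -
  have "-p - 2 * p\<^sup>2 \<le> ln (1 - p)" using ln_one_minus_pos_lower_bound assms by simp
  moreover have "2 * p\<^sup>2 \<le> p" using assms mult_left_mono[of "2*p" 1 p] by (simp add: power2_eq_square)
  ultimately have "-2 * p \<le> ln (1 - p)" by linarith
  hence "real n * (-2 * p) \<le> real n * ln (1 - p)" by (intro mult_left_mono) auto
  hence "-3 \<le> real n * ln (1 - p)" using assms(3) by linarith
  hence "exp (-3) \<le> exp (real n * ln (1 - p))" by simp
  also have "exp (real n * ln (1 - p)) = (1 - p) ^ n"
    using assms by (subst exp_of_nat_mult) simp
  finally show ?thesis .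
qed

lemma final_alg:
  fixes a D N :: real
  assumes "a > 0" "N > 0"
  shows "a * D\<^sup>2 / (a * exp (-3) / N\<^sup>2)\<^sup>2 = D\<^sup>2 * N ^ 4 * exp 6 / a"
proof -
  have e: "exp (-3) ^ 2 * exp 6 = (1::real)" by (simp add: exp_of_nat_mult[symmetric] exp_add[symmetric])
  show ?thesis using assms e by (simp add: field_simps power2_eq_square) (simp add: algebra_simps eval_nat_numeral)
qed

lemma main_n:
  fixes n :: nat and c :: real and k :: nat and chi :: "nat \<Rightarrow> real"
  defines "p \<equiv> lam_seq chi n" and "T \<equiv> c * (u_seq n * real n) * phi_seq k chi n ^ k"
  assumes p: "0 < p" "p \<le> 1/2" "real n * p \<le> 3/2" "1 \<le> real n * p" and T: "1 < T"
  shows "(let P = random_cube_subgraph n (lam_seq chi n);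
              EU = measure_pmf.expectation P (\<lambda>G. real (card (U_set c k chi n G)))
          in measure_pmf.prob P {G. \<bar>real (card (U_set c k chi n G)) - EU\<bar> \<ge> EU / real n})
         \<le> (1 + real n * T)\<^sup>2 * real n ^ 4 * exp 6 / 2 ^ n"
proof -
  define V where "V = cube_vertices n"
  have fV: "finite V" by (simp add: V_def cube_vertices_def)
  have cardV: "card V = 2 ^ n" by (simp add: V_def cube_vertices_def card_Pow)
  have p1: "0 \<le> p" "p \<le> 1" using p by auto
  have n1: "real n > 0" using p by (metis less_eq_real_def linorder_not_le mult_eq_0_iff not_one_le_zero of_nat_0_less_iff gr0I of_nat_0)
  define F where "F K = real (card (UK T K))" for K
  define D where "D = 1 + real n * T"
  have P: "random_cube_subgraph n (lam_seq chi n) = Pi_pmf V False (\<lambda>_. bernoulli_pmf p)"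
    by (simp add: random_cube_subgraph_def V_def p_def)
  define EU where "EU = EE p V F"
  have EU_eq: "measure_pmf.expectation (random_cube_subgraph n (lam_seq chi n)) (\<lambda>G. real (card (U_set c k chi n G))) = EU"
    unfolding P EU_def
    by (subst expectation_Pi[OF fV p1]) (auto intro!: EE_cong simp: F_def U_set_eq V_def T_def)
  have prob_eq: "measure_pmf.prob (random_cube_subgraph n (lam_seq chi n)) {G. \<bar>real (card (U_set c k chi n G)) - EU\<bar> \<ge> EU / real n}
      = (\<Sum>K\<in>{K\<in>Pow V. EU / real n \<le> \<bar>F K - EU\<bar>}. wt p V K)"
    unfolding P
    by (subst prob_Pi[OF fV p1]) (auto intro!: sum.cong simp: F_def U_set_eq V_def T_def)
  have EUlow: "2 ^ n * (p * (1 - p) ^ n) \<le> EU"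
  proof -
    have "real (2 ^ n) * (p * (1 - p) ^ n) = (\<Sum>v\<in>V. p * (1 - p) ^ n)" by (simp add: cardV)
    also have "\<dots> \<le> (\<Sum>v\<in>V. EE p V (\<lambda>K. \<Prod>x\<in>V. isof v x (x \<in> K)))"
    proof (intro sum_mono EE_iso[OF fV _ p1])
      fix v assume "v \<in> V"
      thus "card {x \<in> V. cube_adj x v} \<le> n" using neighbors_card[of v n] by (simp add: V_def cube_vertices_def)
    qed
    also have "\<dots> = EE p V (\<lambda>K. \<Sum>v\<in>V. \<Prod>x\<in>V. isof v x (x \<in> K))" by (rule EE_sum[symmetric])
    also have "\<dots> \<le> EU" unfolding EU_def
    proof (intro EE_mono[OF p1])
      fix K assume K: "K \<subseteq> V"
      have "(\<Sum>v\<in>V. \<Prod>x\<in>V. isof v x (x \<in> K)) = (\<Sum>v\<in>V. if v \<in> K \<and> (\<forall>u\<in>K. \<not> cube_adj v u) then 1 else 0)"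
        using iso_val[OF fV K] by (intro sum.cong) auto
      also have "\<dots> = real (card (V \<inter> {v. v \<in> K \<and> (\<forall>u\<in>K. \<not> cube_adj v u)}))"
        using fV by (simp add: sum.If_cases)
      also have "\<dots> \<le> F K" unfolding F_def
      proof (intro of_nat_mono card_mono)
        show "finite (UK T K)" using finite_subset[OF K fV] unfolding UK_def by auto
        show "V \<inter> {v. v \<in> K \<and> (\<forall>u\<in>K. \<not> cube_adj v u)} \<subseteq> UK T K"
          using isolated_in_UK[OF _ _ T] by blast
      qed
      finally show "(\<Sum>v\<in>V. \<Prod>x\<in>V. isof v x (x \<in> K)) \<le> F K" .
    qed
    finally show ?thesis by simp
  qed
  have e3: "exp (-3) \<le> (1 - p) ^ n" using one_minus_pow_lower p by auto
  define y where "y = 2 ^ n * exp (-3) / (real n)\<^sup>2"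
  have ypos: "y > 0" unfolding y_def using n1 by simp
  have t_low: "y \<le> EU / real n"
  proof -
    have "1 / real n \<le> p" using p n1 by (simp add: field_simps)
    hence "(1 / real n) * exp (-3) \<le> p * (1 - p) ^ n" using e3 p1 by (intro mult_mono) auto
    hence "2 ^ n * ((1 / real n) * exp (-3)) \<le> 2 ^ n * (p * (1 - p) ^ n)" by (intro mult_left_mono) auto
    hence "2 ^ n * ((1 / real n) * exp (-3)) \<le> EU" using EUlow by linarith
    hence "2 ^ n * ((1 / real n) * exp (-3)) / real n \<le> EU / real n" by (rule divide_right_mono) (use n1 in simp)
    thus ?thesis unfolding y_def by (simp add: power2_eq_square field_simps)
  qed
  have tpos: "EU / real n > 0" using ypos t_low by linarith
  have var: "EE p V (\<lambda>K. (F K - EU)\<^sup>2) \<le> 2 ^ n * D\<^sup>2"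
  proof -
    have "EE p V (\<lambda>K. (F K - EU)\<^sup>2) \<le> (\<Sum>v\<in>V. EE p V (\<lambda>S. (F (insert v S) - F (S - {v}))\<^sup>2))"
      unfolding EU_def by (rule efron_stein[OF fV p1])
    also have "\<dots> \<le> (\<Sum>v\<in>V. D\<^sup>2)"
    proof (intro sum_mono)
      fix v assume v: "v \<in> V"
      have "EE p V (\<lambda>S. (F (insert v S) - F (S - {v}))\<^sup>2) \<le> EE p V (\<lambda>_. D\<^sup>2)"
      proof (intro EE_mono[OF p1])
        fix S assume "S \<subseteq> V"
        hence "\<bar>F (insert v S) - F (S - {v})\<bar> \<le> D" unfolding F_def D_def
          using UK_flip[of S n v T] v T unfolding V_def by simp
        hence "\<bar>F (insert v S) - F (S - {v})\<bar>\<^sup>2 \<le> D\<^sup>2" by (intro power_mono) auto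
        thus "(F (insert v S) - F (S - {v}))\<^sup>2 \<le> D\<^sup>2" by simp
      qed
      thus "EE p V (\<lambda>S. (F (insert v S) - F (S - {v}))\<^sup>2) \<le> D\<^sup>2" using EE_const[OF fV] by simp
    qed
    also have "\<dots> = 2 ^ n * D\<^sup>2" by (simp add: cardV)
    finally show ?thesis .
  qed
  have "(\<Sum>K\<in>{K\<in>Pow V. EU / real n \<le> \<bar>F K - EU\<bar>}. wt p V K) \<le> EE p V (\<lambda>K. (F K - EU)\<^sup>2) / (EU / real n)\<^sup>2"
    by (rule chebyshev_EE[OF fV p1 tpos])
  also have "\<dots> \<le> 2 ^ n * D\<^sup>2 / (EU / real n)\<^sup>2"
    using var tpos by (simp add: divide_right_mono)
  also have "\<dots> \<le> 2 ^ n * D\<^sup>2 / y\<^sup>2"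
  proof (intro divide_left_mono)
    show "y\<^sup>2 \<le> (EU / real n)\<^sup>2" using t_low ypos by (intro power_mono) auto
  qed (use ypos tpos in \<open>auto intro!: mult_pos_pos zero_less_power\<close>)
  also have "\<dots> = D\<^sup>2 * real n ^ 4 * exp 6 / 2 ^ n"
    unfolding y_def by (rule final_alg) (use n1 in auto)
  finally show ?thesis unfolding Let_def EU_eq prob_eq D_def .
qed


lemma un_eq: "n > 0 \<Longrightarrow> u_seq n * real n = real n powr (2/3)"
proof -
  assume n: "n > 0"
  have "real n powr (-(1/3)) * real n powr 1 = real n powr (-(1/3) + 1)" by (rule powr_add[symmetric])
  thus ?thesis using n unfolding u_seq_def by simp
qed

lemma u_le1: "n > 0 \<Longrightarrow> real n powr (-1/3) \<le> 1"
proof -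
  assume n: "n > 0"
  have "real n powr (-1/3) \<le> real n powr 0" using n by (intro powr_mono) auto
  thus ?thesis using n by simp
qed

lemma m_lower: "n > 0 \<Longrightarrow> real (m_seq n) \<ge> real n - 3/4 * real n powr (2/3)"
proof -
  assume n: "n > 0"
  have x: "0 \<le> 3/4 * u_seq n * real n" unfolding u_seq_def by simp
  have le: "real (nat \<lfloor>3/4 * u_seq n * real n\<rfloor>) \<le> 3/4 * u_seq n * real n" using x by linarith
  have "3/4 * u_seq n * real n \<le> real n"
  proof -
    have "real n powr (2/3) \<le> real n powr 1" using n by (intro powr_mono) auto
    moreover have "0 \<le> u_seq n" unfolding u_seq_def by simp
    moreover have "u_seq n \<le> 1" using u_le1[OF n] by (simp add: u_seq_def)
    ultimately show ?thesis using un_eq[OF n] n by simp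
  qed
  hence "nat \<lfloor>3/4 * u_seq n * real n\<rfloor> \<le> n" using le by linarith
  hence "real (m_seq n) = real n - real (nat \<lfloor>3/4 * u_seq n * real n\<rfloor>)" unfolding m_seq_def by simp
  thus ?thesis using le un_eq[OF n] by (simp add: mult.assoc)
qed

lemma poly_ineq: "0 \<le> x \<Longrightarrow> x \<le> 1/3 \<Longrightarrow> 1 \<le> (1 + x) * (1 - 3/8 * x) * (1 - x / 4)" for x :: real
proof -
  assume h: "0 \<le> x" "x \<le> 1/3"
  have "(1 + x) * (1 - 3/8 * x) * (1 - x / 4) = 1 + x * (3/8 - 17/32 * x + 3/32 * x\<^sup>2)"
    by (simp add: power2_eq_square field_simps)
  moreover have "0 \<le> 3/8 - 17/32 * x + 3/32 * x\<^sup>2" using h by (simp add: power2_eq_square) 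
  ultimately show ?thesis using h by simp
qed

lemma pi_lower:
  assumes n: "n > 0" and chi: "2 * real n powr (-1/3) \<le> chi n" "0 \<le> chi n" "chi n \<le> 1/3"
  shows "chi n / 4 \<le> pi_seq chi n"
proof -
  define x where "x = chi n"
  define p where "p = lam_seq chi n"
  define m where "m = m_seq n"
  define a where "a = real n powr (-1/3)"
  define s where "s = 1 - x / 4"
  have N: "real n > 0" using n by simp
  have p01: "0 \<le> p" "p \<le> 1"
  proof -
    show "0 \<le> p" unfolding p_def lam_seq_def using chi by simp
    have "1 + chi n \<le> real n"
    proof -
      have "real n powr (-1/3) \<le> 1" using n by (rule u_le1)
      have "real n \<ge> 1" using n by simp
      moreover have "real n powr (-1/3) > 0" using n by simp
      ultimately have "2 * real n powr (-1/3) > 0" by simp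
      hence "real n \<noteq> 1 \<or> True" by simp
      show ?thesis
      proof (cases "n = 1")
        case True thus ?thesis using chi by simp
      next
        case False hence "real n \<ge> 2" using n by simp
        thus ?thesis using chi by simp
      qed
    qed
    thus "p \<le> 1" unfolding p_def lam_seq_def using N by simp
  qed
  have s01: "0 \<le> s" "s \<le> 1" unfolding s_def x_def using chi by auto
  have mu: "real m * p \<ge> (1 + x) * (1 - 3/4 * a)"
  proof -
    have "real m \<ge> real n - 3/4 * real n powr (2/3)" unfolding m_def by (rule m_lower[OF n])
    moreover have "real n powr (2/3) = a * real n" unfolding a_def using un_eq[OF n] by (simp add: u_seq_def)
    ultimately have "real m \<ge> real n * (1 - 3/4 * a)" by (simp add: algebra_simps)
    hence mp: "real m * p \<ge> real n * (1 - 3/4 * a) * p" using p01 by (intro mult_right_mono) auto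
    have np: "real n * p = 1 + x" unfolding p_def lam_seq_def x_def using N by simp
    have "real n * (1 - 3/4 * a) * p = (real n * p) * (1 - 3/4 * a)" by (simp add: algebra_simps)
    also have "\<dots> = (1 + x) * (1 - 3/4 * a)" using np by simp
    finally show ?thesis using mp by linarith
  qed
  have a_le: "a \<le> x / 2" unfolding a_def x_def using chi by simp
  have mu1: "real m * p * (1 - x/4) \<ge> 1"
  proof -
    have "1 - 3/4 * a \<ge> 1 - 3/8 * x" using a_le by simp
    hence "(1 + x) * (1 - 3/4 * a) \<ge> (1 + x) * (1 - 3/8 * x)" using chi unfolding x_def by (intro mult_left_mono) auto
    hence "real m * p \<ge> (1 + x) * (1 - 3/8 * x)" using mu by linarith
    hence "real m * p * (1 - x/4) \<ge> (1 + x) * (1 - 3/8 * x) * (1 - x/4)"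
      using chi unfolding x_def by (intro mult_right_mono) auto
    moreover have "(1 + x) * (1 - 3/8 * x) * (1 - x/4) \<ge> 1" using chi unfolding x_def by (intro poly_ineq) auto
    ultimately show ?thesis by linarith
  qed
  have "(p * s + (1 - p)) ^ m \<le> s"
  proof -
    define e where "e = x / 4"
    have e: "0 \<le> e" "e \<le> 1" unfolding e_def x_def using chi by auto
    have "p * s + (1 - p) = 1 - p * e" unfolding s_def e_def by (simp add: algebra_simps)
    moreover have "1 - p * e \<le> exp (- (p * e))" using exp_ge_add_one_self[of "- (p * e)"] by simp
    moreover have "0 \<le> 1 - p * e" using p01 e by (simp add: mult_le_one)
    ultimately have "(p * s + (1 - p)) ^ m \<le> exp (- (p * e)) ^ m" by (simp add: power_mono)
    also have "\<dots> = exp (- (real m * p * e))" by (simp add: exp_of_nat_mult[symmetric] algebra_simps)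
    also have "\<dots> \<le> 1 / (1 + real m * p * e)"
    proof -
      have pos: "0 \<le> real m * p * e" using p01 e by simp
      have "1 + real m * p * e \<le> exp (real m * p * e)" by (rule exp_ge_add_one_self)
      thus ?thesis using pos by (simp add: exp_minus field_simps)
    qed
    also have "\<dots> \<le> s"
    proof -
      have pos: "0 \<le> real m * p * e" using p01 e by simp
      have "1 \<le> s * (1 + real m * p * e)"
      proof -
        have "s * (1 + real m * p * e) - 1 = e * (real m * p * (1 - e) - 1)"
          unfolding s_def e_def by (simp add: field_simps)
        moreover have "real m * p * (1 - e) - 1 \<ge> 0" using mu1 unfolding e_def by simp
        moreover have "0 \<le> e * (real m * p * (1 - e) - 1)" using e calculation(2) by simp
        ultimately show ?thesis by linarith
      qed
      thus ?thesis using pos by (simp add: field_simps)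
    qed
    finally show ?thesis .
  qed
  hence "pgf (binomial_pmf m p) s \<le> ennreal s"
    using pgf_binomial[OF p01 s01(1)] by (simp add: ennreal_leI)
  hence "1 - s \<le> gw_survival (binomial_pmf m p)" by (rule gw_survival_lower[OF s01])
  thus ?thesis unfolding pi_seq_def m_def p_def s_def x_def by simp
qed


lemma T_bounds:
  fixes n k :: nat and c delta :: real and chi :: "nat \<Rightarrow> real"
  assumes n: "n \<ge> 3" and k: "k \<ge> 1" and c: "c > 0"
   and chi: "real n powr (-1/3 + delta) \<le> chi n" "chi n \<le> 1/3"
   and b1: "real n powr delta \<ge> 2" "real n powr delta \<ge> 128 * real k * (real k + 1)"
   and b2: "real n powr (2/3) \<ge> 8 * real k * (real k + 1)" "c * real n powr (2/3) > 1"
  shows "1 < c * (u_seq n * real n) * phi_seq k chi n ^ k"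
        "c * (u_seq n * real n) * phi_seq k chi n ^ k \<le> c * real n ^ (k+1)"
proof -
  have n0: "n > 0" using n by simp
  have N: "real n \<ge> 1" using n by simp
  define a where "a = real n powr (-1/3)"
  have a0: "a > 0" unfolding a_def using n0 by simp
  have a1: "a \<le> 1" unfolding a_def by (rule u_le1[OF n0])
  have split: "real n powr (-1/3 + delta) = a * real n powr delta" unfolding a_def
    by (rule powr_add)
  have chi_a: "chi n \<ge> a * real n powr delta" using chi split by simp
  have "a * 2 \<le> a * real n powr delta" using b1(1) a0 by (intro mult_left_mono) auto
  hence chi2: "chi n \<ge> 2 * a" using chi_a by simp
  have chi0: "chi n \<ge> 0" using chi2 a0 by simp
  have pil: "chi n / 4 \<le> pi_seq chi n" using pi_lower[of n chi, OF n0 _ chi0 chi(2)] chi2 unfolding a_def by simp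
  have pi01: "0 \<le> pi_seq chi n" "pi_seq chi n \<le> 1" unfolding pi_seq_def by (rule gw_survival_bounds)+
  define q where "q = real n powr (2/3) / (2 * real k * (real k + 1))"
  have kk: "2 * real k * (real k + 1) \<ge> 4"
  proof -
    have "real k \<ge> 1" using k by simp
    hence "2 * real k * (real k + 1) \<ge> 2 * 1 * (1 + 1)" by (intro mult_mono) auto
    thus ?thesis by simp
  qed
  have q_eq: "u_seq n * real n / (2 * real k * (real k + 1)) = q" unfolding q_def un_eq[OF n0] ..
  have nu_eq: "real (nu_seq k n) = real (nat \<lfloor>q\<rfloor>)" unfolding nu_seq_def q_eq ..
  have q4: "q \<ge> 4" unfolding q_def using b2 kk by (simp add: field_simps)
  have nu_low: "real (nu_seq k n) \<ge> q / 2" unfolding nu_eq using q4 by linarith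
  have p23: "real n powr (2/3) \<le> real n"
  proof -
    have "real n powr (2/3) \<le> real n powr 1" using N by (intro powr_mono) auto
    thus ?thesis using n0 by simp
  qed
  have nu_up: "real (nu_seq k n) \<le> real n"
  proof -
    have X0: "0 \<le> real n powr (2/3)" by simp
    have "real n powr (2/3) * 1 \<le> real n powr (2/3) * (2 * real k * (real k + 1))" using kk X0 by (intro mult_left_mono) auto
    hence "q \<le> real n powr (2/3)" unfolding q_def using kk by (simp add: divide_le_eq)
    thus ?thesis unfolding nu_eq using p23 q4 by linarith
  qed
  define xx where "xx = (1 + chi n) * u_seq n / 4"
  define E where "E = 1 - exp (-(1 + chi n) * u_seq n / 4)"
  have E_eq: "E = 1 - exp (- xx)" unfolding E_def xx_def by (simp add: algebra_simps)
  have u_eq: "u_seq n = a" unfolding u_seq_def a_def ..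
  have xx0: "xx \<ge> a / 4" unfolding xx_def u_eq using chi0 a0 by (simp add: field_simps)
  have "(1 + chi n) * a \<le> (4/3) * 1" using chi a1 a0 chi0 by (intro mult_mono) auto
  hence xx1: "xx \<le> 1" unfolding xx_def u_eq by simp
  have E_low: "E \<ge> a / 8"
  proof -
    have xp: "xx > 0" using xx0 a0 by linarith
    have "1 + xx \<le> exp xx" by (rule exp_ge_add_one_self)
    hence "exp (- xx) \<le> 1 / (1 + xx)" using xp by (simp add: exp_minus field_simps)
    hence "E \<ge> 1 - 1 / (1 + xx)" unfolding E_eq by simp
    also have "1 - 1 / (1 + xx) = xx / (1 + xx)" using xp by (simp add: field_simps)
    also have "xx / (1 + xx) \<ge> xx / 2" using xp xx1 by (intro divide_left_mono) auto
    finally show ?thesis using xx0 by linarith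
  qed
  have E01: "0 \<le> E" "E \<le> 1" using E_low a0 xx0 unfolding E_eq by auto
  have phi_eq: "phi_seq k chi n = pi_seq chi n * real (nu_seq k n) * E" unfolding phi_seq_def E_def ..
  have phi_low: "phi_seq k chi n \<ge> 1"
  proof -
    have "chi n / 4 * (q / 2) * (a / 8) \<le> pi_seq chi n * real (nu_seq k n) * E"
      unfolding phi_eq using pil nu_low E_low chi0 q4 a0
      by (intro mult_mono) auto
    moreover have "chi n / 4 * (q / 2) * (a / 8) \<ge> 1"
    proof -
      have "a * a * real n powr (2/3) = 1" unfolding a_def using n0
        by (simp add: powr_add[symmetric])
      hence "chi n * q * a \<ge> real n powr delta / (2 * real k * (real k + 1))"
      proof -
        assume aa: "a * a * real n powr (2/3) = 1"
        have "chi n * q * a \<ge> a * real n powr delta * q * a" using chi_a q4 a0 by (intro mult_right_mono) auto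
        also have "a * real n powr delta * q * a = real n powr delta * (a * a * real n powr (2/3)) / (2 * real k * (real k + 1))"
          unfolding q_def by (simp add: field_simps)
        finally show ?thesis using aa by simp
      qed
      moreover have "real n powr delta / (2 * real k * (real k + 1)) \<ge> 64"
        using b1(2) kk by (simp add: field_simps)
      ultimately have "chi n * q * a \<ge> 64" by linarith
      thus ?thesis by (simp add: field_simps)
    qed
    ultimately show ?thesis unfolding phi_eq by linarith
  qed
  have un: "u_seq n * real n = real n powr (2/3)" by (rule un_eq[OF n0])
  show "1 < c * (u_seq n * real n) * phi_seq k chi n ^ k"
  proof -
    have "1 \<le> phi_seq k chi n ^ k" using phi_low by (rule one_le_power)
    hence "c * real n powr (2/3) * 1 \<le> c * real n powr (2/3) * phi_seq k chi n ^ k"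
      using c by (intro mult_left_mono) auto
    thus ?thesis unfolding un using b2 by simp
  qed
  show "c * (u_seq n * real n) * phi_seq k chi n ^ k \<le> c * real n ^ (k+1)"
  proof -
    have "phi_seq k chi n \<le> 1 * real n * 1" unfolding phi_eq using pi01 nu_up E01
      by (intro mult_mono) auto
    hence "phi_seq k chi n ^ k \<le> real n ^ k" using phi_low by (intro power_mono) auto
    hence "c * real n powr (2/3) * phi_seq k chi n ^ k \<le> c * real n * real n ^ k"
      using c p23 phi_low by (intro mult_mono) auto
    thus ?thesis unfolding un by simp
  qed
qed

lemma bound_alg:
  fixes N T c :: real and k n :: nat
  assumes "N \<ge> 1" "0 \<le> T" "T \<le> c * N ^ (k+1)" "c > 0"
  shows "(1 + N * T)\<^sup>2 * N ^ 4 * exp 6 / 2 ^ n \<le> (1 + c)\<^sup>2 * exp 6 * N ^ (2*k+8) / 2 ^ n"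
proof -
  have "N * T \<le> N * (c * N ^ (k+1))" using assms by (intro mult_left_mono) auto
  also have "\<dots> = c * N ^ (k+2)" by (simp add: algebra_simps)
  finally have 1: "N * T \<le> c * N ^ (k+2)" .
  have 2: "1 \<le> N ^ (k+2)" using assms(1) by (rule one_le_power)
  have "1 + N * T \<le> (1 + c) * N ^ (k+2)" using 1 2 by (simp add: algebra_simps)
  moreover have "0 \<le> 1 + N * T" using assms by simp
  ultimately have "(1 + N * T)\<^sup>2 \<le> ((1 + c) * N ^ (k+2))\<^sup>2" by (intro power_mono) auto
  also have "\<dots> = (1 + c)\<^sup>2 * N ^ (2*k+4)"
  proof -
    have "(N ^ (k+2))\<^sup>2 = N ^ ((k+2)*2)" by (rule power_mult[symmetric])
    also have "(k+2)*2 = 2*k+4" by simp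
    finally have "(N ^ (k+2))\<^sup>2 = N ^ (2*k+4)" .
    thus ?thesis by (simp only: power_mult_distrib)
  qed
  finally have "(1 + N * T)\<^sup>2 * (N ^ 4 * exp 6 / 2 ^ n) \<le> (1 + c)\<^sup>2 * N ^ (2*k+4) * (N ^ 4 * exp 6 / 2 ^ n)"
    using assms(1) by (intro mult_right_mono) auto
  also have "\<dots> = (1 + c)\<^sup>2 * exp 6 * N ^ (2*k+8) / 2 ^ n" by (simp add: power_add[symmetric] algebra_simps)
  finally show ?thesis by simp
qed

theorem lemma3p2:
  fixes eps delta c :: real and k :: nat and chi :: "nat \<Rightarrow> real"
  assumes "0 < eps" and "eps < 1/3" and "delta > 0" and "k \<ge> 1" and "c > 0"
    and "\<forall>\<^sub>F n in sequentially. real n powr (-1/3 + delta) \<le> chi n \<and> chi n \<le> eps"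
  shows "(\<lambda>n. let P = random_cube_subgraph n (lam_seq chi n);
                   EU = measure_pmf.expectation P (\<lambda>G. real (card (U_set c k chi n G)))
               in measure_pmf.prob P
                    {G. \<bar>real (card (U_set c k chi n G)) - EU\<bar> \<ge> EU / real n})
          \<longlonglongrightarrow> 0"
proof -
  define B where "B n = (1 + c)\<^sup>2 * exp 6 * (real n ^ (2*k+8) / 2 ^ n)" for n
  have lim0: "(\<lambda>n. real n ^ (2*k+8) / 2 ^ n) \<longlonglongrightarrow> 0" by real_asymp
  have limB: "B \<longlonglongrightarrow> 0" unfolding B_def using tendsto_mult_right_zero[OF lim0] by simp
  have l1: "filterlim (\<lambda>n. real n powr delta) at_top sequentially" using assms(3) by real_asymp
  have l2: "filterlim (\<lambda>n. real n powr (2/3)) at_top sequentially" by real_asymp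
  have e3: "\<forall>\<^sub>F n in sequentially. real n powr delta \<ge> max 2 (128 * real k * (real k + 1))"
  proof -
    have "\<forall>Z. \<forall>\<^sub>F n in sequentially. Z \<le> real n powr delta" using l1 by (simp add: filterlim_at_top)
    thus ?thesis by blast
  qed
  have e4: "\<forall>\<^sub>F n in sequentially. real n powr (2/3) \<ge> max (8 * real k * (real k + 1)) (2 / c)"
  proof -
    have "\<forall>Z. \<forall>\<^sub>F n in sequentially. Z \<le> real n powr (2/3)" using l2 by (simp add: filterlim_at_top)
    thus ?thesis by blast
  qed
  have e2: "\<forall>\<^sub>F n in sequentially. n \<ge> 3" by (rule eventually_ge_at_top)
  have ev: "\<forall>\<^sub>F n in sequentially. (let P = random_cube_subgraph n (lam_seq chi n);
                   EU = measure_pmf.expectation P (\<lambda>G. real (card (U_set c k chi n G)))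
               in measure_pmf.prob P
                    {G. \<bar>real (card (U_set c k chi n G)) - EU\<bar> \<ge> EU / real n}) \<le> B n"
    using assms(6) e2 e3 e4
  proof eventually_elim
    case (elim n)
    have n: "n \<ge> 3" using elim by simp
    have N: "real n \<ge> 3" using n by simp
    have chi: "real n powr (-1/3 + delta) \<le> chi n" "chi n \<le> 1/3" using elim assms(2) by auto
    have chi0: "0 \<le> chi n" using chi(1) powr_ge_zero[of "real n" "-1/3 + delta"] by linarith
    have b1: "real n powr delta \<ge> 2" "real n powr delta \<ge> 128 * real k * (real k + 1)" using elim by auto
    have b2a: "real n powr (2/3) \<ge> 8 * real k * (real k + 1)" "real n powr (2/3) \<ge> 2 / c" using elim by auto
    have b2: "c * real n powr (2/3) > 1"
    proof -
      have "c * (2 / c) \<le> c * real n powr (2/3)" using b2a(2) assms(5) by (intro mult_left_mono) auto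
      thus ?thesis using assms(5) by simp
    qed
    note TB = T_bounds[of n k c delta chi, OF n assms(4) assms(5) chi b1 b2a(1) b2]
    define p where "p = lam_seq chi n"
    have np: "real n * p = 1 + chi n" unfolding p_def lam_seq_def using N by simp
    have p: "0 < p" "p \<le> 1/2" "real n * p \<le> 3/2" "1 \<le> real n * p"
    proof -
      show "0 < p" unfolding p_def lam_seq_def using chi0 N by simp
      show "real n * p \<le> 3/2" "1 \<le> real n * p" using np chi chi0 by auto
      have "3 * p \<le> real n * p" using N \<open>0 < p\<close> by (intro mult_right_mono) auto
      thus "p \<le> 1/2" using np chi by linarith
    qed
    have "(let P = random_cube_subgraph n (lam_seq chi n);
                   EU = measure_pmf.expectation P (\<lambda>G. real (card (U_set c k chi n G)))
               in measure_pmf.prob P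
                    {G. \<bar>real (card (U_set c k chi n G)) - EU\<bar> \<ge> EU / real n})
         \<le> (1 + real n * (c * (u_seq n * real n) * phi_seq k chi n ^ k))\<^sup>2 * real n ^ 4 * exp 6 / 2 ^ n"
      using main_n[of chi n c k] p TB(1) unfolding p_def by simp
    also have "\<dots> \<le> (1 + c)\<^sup>2 * exp 6 * real n ^ (2*k+8) / 2 ^ n"
      using bound_alg[of "real n" "c * (u_seq n * real n) * phi_seq k chi n ^ k" c k n] N TB assms(5) by simp
    also have "\<dots> = B n" unfolding B_def by simp
    finally show ?case .
  qed
  have ev0: "\<forall>\<^sub>F n in sequentially. 0 \<le> (let P = random_cube_subgraph n (lam_seq chi n);
                   EU = measure_pmf.expectation P (\<lambda>G. real (card (U_set c k chi n G)))
               in measure_pmf.prob P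
                    {G. \<bar>real (card (U_set c k chi n G)) - EU\<bar> \<ge> EU / real n})"
    by (intro always_eventually allI) (simp add: Let_def)
  show ?thesis by (rule tendsto_sandwich[OF ev0 ev tendsto_const limB])
qed

end
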